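(* Let $(X,\mu)$ be a standard probability space and let $T,U$ be measure-preserving Borel bijections of $(X,\mu)$ with disjoint supports. Suppose there are relatively prime integers $p,q\geq 2$ such that every $T$-orbit is finite with cardinality dividing a power of $p$, and every $U$-orbit is finite with cardinality dividing a power of $q$. Then both $T$ and $U$ belong to the closure, for the uniform topology, of the group generated by $TU$.
   Context: The support of $T$ is $\{x:T(x)\neq x\}$. The uniform topology on the group of measure-preserving bijections of $(X,\mu)$ (identified up to null sets) is given by the metric $d_u(T,U)=\mu(\{x:T(x)\neq U(x)\})$. *)

theory Defs
  imports "HOL-Probability.Probability"
begin

definition ipow :: "('a \<Rightarrow> 'a) \<Rightarrow> int \<Rightarrow> 'a \<Rightarrow> 'a" where
  "ipow T n = (if 0 \<le> n then T ^^ nat n else (inv T) ^^ nat (- n))"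

definition orbit_of :: "('a \<Rightarrow> 'a) \<Rightarrow> 'a \<Rightarrow> 'a set" where
  "orbit_of T x = range (\<lambda>n. ipow T n x)"

definition supp :: "('a \<Rightarrow> 'a) \<Rightarrow> 'a set" where
  "supp T = {x. T x \<noteq> x}"

definition mp_bij :: "'a measure \<Rightarrow> ('a \<Rightarrow> 'a) \<Rightarrow> bool" where
  "mp_bij M T \<longleftrightarrow> bij T \<and> T \<in> M \<rightarrow>\<^sub>M M \<and> distr M M T = M"

definition d_u :: "'a measure \<Rightarrow> ('a \<Rightarrow> 'a) \<Rightarrow> ('a \<Rightarrow> 'a) \<Rightarrow> real" where
  "d_u M T U = measure M {x \<in> space M. T x \<noteq> U x}"

definition cyclic_gen :: "('a \<Rightarrow> 'a) \<Rightarrow> ('a \<Rightarrow> 'a) set" where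
  "cyclic_gen V = range (\<lambda>n. ipow V n)"

definition in_uniform_closure :: "'a measure \<Rightarrow> ('a \<Rightarrow> 'a) set \<Rightarrow> ('a \<Rightarrow> 'a) \<Rightarrow> bool" where
  "in_uniform_closure M G S \<longleftrightarrow> (\<forall>e>0. \<exists>R\<in>G. d_u M S R < e)"

end

theory Submission
  imports Defs
begin

lemma fix_iter: "f x = x \<Longrightarrow> (f ^^ n) x = x"
  by (induction n) auto

lemma inv_iter_cancel:
  fixes T :: "'a \<Rightarrow> 'a"
  assumes "bij T" shows "(inv T ^^ k) ((T ^^ k) y) = y"
  using inv_fn_o_fn_is_id[OF assms, of k] by (metis comp_apply)

lemma period_reduce:
  assumes "0 < m" "(T ^^ m) x = x"
  shows "(T ^^ n) x = (T ^^ (n mod m)) x"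
proof -
  have "n = n mod m + m * (n div m)" by simp
  then have "(T ^^ n) x = (T ^^ (n mod m)) (((T ^^ m) ^^ (n div m)) x)"
    by (metis funpow_add funpow_mult comp_apply)
  also have "((T ^^ m) ^^ (n div m)) x = x" using assms(2) by (rule fix_iter)
  finally show ?thesis .
qed

lemma orbit_period:
  assumes bij: "bij T" and fin: "finite (orbit_of T x)"
  shows "(T ^^ card (orbit_of T x)) x = x"
proof -
  let ?O = "orbit_of T x"
  let ?f = "\<lambda>i::nat. (T ^^ i) x"
  have ipos: "ipow T (int i) x = (T ^^ i) x" for i unfolding ipow_def by simp
  have rng: "range ?f \<subseteq> ?O" unfolding orbit_of_def using ipos by (metis image_subsetI rangeI)
  have injT: "inj (T ^^ i)" for i using bij bij_is_inj inj_fn by blast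
  have "\<not> inj ?f"
  proof
    assume "inj ?f"
    then have "finite (UNIV :: nat set)" using finite_imageD finite_subset[OF rng fin] by blast
    then show False by simp
  qed
  then obtain i j where ij: "i < j" "?f i = ?f j"
    unfolding inj_def by (metis linorder_neqE_nat)
  have "(T ^^ i) ((T ^^ (j - i)) x) = (T ^^ i) x"
    using ij by (metis (no_types, lifting) add_diff_inverse_nat comp_apply funpow_add less_imp_not_less)
  then have "(T ^^ (j - i)) x = x" using injT[of i] by (meson injD)
  then have ex: "\<exists>m. 0 < m \<and> (T ^^ m) x = x" using ij by (intro exI[of _ "j - i"]) auto
  define m where "m = (LEAST m. 0 < m \<and> (T ^^ m) x = x)"
  have m: "0 < m" "(T ^^ m) x = x" using LeastI_ex[OF ex] unfolding m_def by auto
  have mmin: "\<not> (0 < k \<and> (T ^^ k) x = x)" if "k < m" for k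
    using not_less_Least[of k "\<lambda>m. 0 < m \<and> (T ^^ m) x = x"] that unfolding m_def by blast
  have sub: "?O \<subseteq> ?f ` {..<m}"
  proof
    fix y assume "y \<in> ?O"
    then obtain n where n: "y = ipow T n x" unfolding orbit_of_def by auto
    show "y \<in> ?f ` {..<m}"
    proof (cases "0 \<le> n")
      case True
      then have "y = (T ^^ (nat n mod m)) x" using n period_reduce[OF m, of "nat n"] unfolding ipow_def by simp
      then show ?thesis using m(1) by auto
    next
      case False
      define k where "k = nat (- n)"
      define j where "j = m - k mod m"
      have "k + j = m * (k div m) + m" unfolding j_def using m(1)
        by (metis add.assoc add.commute le_add_diff_inverse mod_less_eq_dividend mod_mult_div_eq
            mod_less_divisor less_imp_le)
      then have "(k + j) mod m = 0" by simp
      then have "(T ^^ (k + j)) x = x" using period_reduce[OF m, of "k+j"] by simp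
      then have "(T ^^ k) ((T ^^ j) x) = x" by (simp add: funpow_add)
      then have "(inv T ^^ k) x = (T ^^ j) x" using inv_iter_cancel[OF bij, of k "(T ^^ j) x"] by simp
      then have "y = (T ^^ (j mod m)) x" using n False period_reduce[OF m, of j]
        unfolding ipow_def k_def by simp
      then show ?thesis using m(1) by auto
    qed
  qed
  have injon: "inj_on ?f {..<m}"
  proof (rule inj_onI)
    fix a b assume a: "a \<in> {..<m}" and b: "b \<in> {..<m}" and e: "?f a = ?f b"
    show "a = b"
    proof (rule ccontr)
      assume "a \<noteq> b"
      then consider "a < b" | "b < a" by linarith
      then show False
      proof cases
        case 1
        have "(T ^^ a) ((T ^^ (b - a)) x) = (T ^^ a) x"
          using e 1 by (metis add_diff_inverse_nat comp_apply funpow_add less_imp_not_less)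
        then have "(T ^^ (b - a)) x = x" using injT[of a] by (meson injD)
        moreover have "b - a < m" using b by auto
        ultimately show False using mmin[of "b - a"] 1 by auto
      next
        case 2
        have "(T ^^ b) ((T ^^ (a - b)) x) = (T ^^ b) x"
          using e 2 by (metis add_diff_inverse_nat comp_apply funpow_add less_imp_not_less)
        then have "(T ^^ (a - b)) x = x" using injT[of b] by (meson injD)
        moreover have "a - b < m" using a by auto
        ultimately show False using mmin[of "a - b"] 2 by auto
      qed
    qed
  qed
  have c1: "card ?O \<le> m" using card_mono[OF _ sub] card_image_le[of "{..<m}" ?f] by simp
  have "card (?f ` {..<m}) = m" using card_image[OF injon] by simp
  moreover have "?f ` {..<m} \<subseteq> ?O" using rng by auto
  ultimately have "m \<le> card ?O" using card_mono[OF fin] by metis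
  with c1 have "card ?O = m" by simp
  then show ?thesis using m(2) by metis
qed

lemma orbit_dvd:
  assumes "bij T" "finite (orbit_of T x)" "card (orbit_of T x) dvd N"
  shows "(T ^^ N) x = x"
proof -
  obtain t where "N = card (orbit_of T x) * t" using assms(3) by blast
  then show ?thesis using fix_iter[where f="T ^^ card (orbit_of T x)" and x=x and n=t, OF orbit_period[OF assms(1,2)]] by (simp add: funpow_mult)
qed

lemma supp_inv: assumes "inj T" "x \<in> supp T" shows "T x \<in> supp T"
  using assms unfolding supp_def by (auto dest: injD)

lemma commute:
  assumes "inj T" "inj U" "supp T \<inter> supp U = {}"
  shows "T (U x) = U (T x)"
proof -
  consider "x \<in> supp T" | "x \<in> supp U" | "x \<notin> supp T" "x \<notin> supp U" by blast
  then show ?thesis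
  proof cases
    case 1
    then have "U x = x" "U (T x) = T x" using supp_inv[OF assms(1) 1] assms(3)
      unfolding supp_def by auto
    then show ?thesis by simp
  next
    case 2
    then have "T x = x" "T (U x) = U x" using supp_inv[OF assms(2) 2] assms(3)
      unfolding supp_def by auto
    then show ?thesis by simp
  next
    case 3 then show ?thesis unfolding supp_def by auto
  qed
qed

lemma funpow_comm:
  assumes "\<And>x. T (U x) = U (T x)"
  shows "(T ^^ n) (U x) = U ((T ^^ n) x)"
  using assms by (induction n) auto

lemma funpow_comp_comm:
  assumes "\<And>x. T (U x) = U (T x)"
  shows "((T \<circ> U) ^^ n) x = (T ^^ n) ((U ^^ n) x)"
proof (induction n arbitrary: x)
  case 0 then show ?case by simp
next
  case (Suc n)
  have c: "(U ^^ n) (T y) = T ((U ^^ n) y)" for y using funpow_comm[of U T] assms by metis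
  show ?case using Suc c by (simp add: funpow_Suc_right del: funpow.simps)
qed

lemma measurable_iter:
  assumes "T \<in> M \<rightarrow>\<^sub>M M" shows "T ^^ n \<in> M \<rightarrow>\<^sub>M M"
proof (induction n)
  case 0 then show ?case by simp
next
  case (Suc n) then show ?case using assms by (simp add: measurable_comp)
qed

theorem lemma6p1:
  fixes M :: "'a::polish_space measure" and T U :: "'a \<Rightarrow> 'a" and p q :: nat
  assumes "prob_space M" and "sets M = sets borel"
    and "mp_bij M T" and "mp_bij M U"
    and "supp T \<inter> supp U = {}"
    and "p \<ge> 2" and "q \<ge> 2" and "coprime p q"
    and "\<forall>x. finite (orbit_of T x) \<and> (\<exists>k. card (orbit_of T x) dvd p ^ k)"
    and "\<forall>x. finite (orbit_of U x) \<and> (\<exists>k. card (orbit_of U x) dvd q ^ k)"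
  shows "in_uniform_closure M (cyclic_gen (T \<circ> U)) T \<and> in_uniform_closure M (cyclic_gen (T \<circ> U)) U"
proof -
  interpret prob_space M by fact
  have sp: "space M = UNIV" using sets_eq_imp_space_eq[OF assms(2)] by simp
  have bT: "bij T" and mT: "T \<in> M \<rightarrow>\<^sub>M M" and bU: "bij U" and mU: "U \<in> M \<rightarrow>\<^sub>M M"
    using assms(3,4) unfolding mp_bij_def by auto
  have iT: "inj T" and iU: "inj U" using bT bU bij_is_inj by auto
  have comm: "T (U x) = U (T x)" for x using commute[OF iT iU assms(5)] .
  define A where "A k = {x. (T ^^ (p ^ k)) x = x \<and> (U ^^ (q ^ k)) x = x}" for k
  define B where "B k = UNIV - A k" for k
  have borelM: "f \<in> borel_measurable M" if "f \<in> M \<rightarrow>\<^sub>M M" for f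
    using that measurable_cong_sets[OF refl assms(2)] by blast
  have Ameas: "A k \<in> sets M" for k
  proof -
    have "{x \<in> space M. (T ^^ (p ^ k)) x = x} \<in> sets M"
      by (rule measurable_equality_set) (auto intro: borelM measurable_iter[OF mT] measurable_ident)
    moreover have "{x \<in> space M. (U ^^ (q ^ k)) x = x} \<in> sets M"
      by (rule measurable_equality_set) (auto intro: borelM measurable_iter[OF mU] measurable_ident)
    ultimately have "{x \<in> space M. (T ^^ (p ^ k)) x = x} \<inter> {x \<in> space M. (U ^^ (q ^ k)) x = x} \<in> sets M"
      by blast
    then show ?thesis unfolding A_def sp by (simp add: Collect_conj_eq)
  qed
  have Bmeas: "B k \<in> sets M" for k unfolding B_def using Ameas sp by (metis sets.compl_sets)
  have Amono: "A k \<subseteq> A (Suc k)" for k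
  proof
    fix x assume "x \<in> A k"
    then have a: "(T ^^ (p ^ k)) x = x" "(U ^^ (q ^ k)) x = x" unfolding A_def by auto
    have "(T ^^ (p ^ Suc k)) x = x" using fix_iter[where f="T ^^ p ^ k" and x=x and n=p, OF a(1)]
      by (simp add: funpow_mult mult.commute)
    moreover have "(U ^^ (q ^ Suc k)) x = x" using fix_iter[where f="U ^^ q ^ k" and x=x and n=q, OF a(2)]
      by (simp add: funpow_mult mult.commute)
    ultimately show "x \<in> A (Suc k)" unfolding A_def by auto
  qed
  have Bdec: "decseq B" unfolding B_def using Amono by (intro decseq_SucI) auto
  have Ball: "(\<Inter>k. B k) = {}"
  proof -
    have "\<exists>k. x \<in> A k" for x
    proof -
      obtain k1 where k1: "card (orbit_of T x) dvd p ^ k1" using assms(9) by blast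
      obtain k2 where k2: "card (orbit_of U x) dvd q ^ k2" using assms(10) by blast
      let ?k = "max k1 k2"
      have d1: "p ^ k1 dvd p ^ ?k" and d2: "q ^ k2 dvd q ^ ?k" by (simp_all add: le_imp_power_dvd)
      have e1: "card (orbit_of T x) dvd p ^ ?k" by (rule dvd_trans[OF k1 d1])
      have e2: "card (orbit_of U x) dvd q ^ ?k" by (rule dvd_trans[OF k2 d2])
      have "(T ^^ (p ^ ?k)) x = x" using orbit_dvd[OF bT _ e1] assms(9) by blast
      moreover have "(U ^^ (q ^ ?k)) x = x" using orbit_dvd[OF bU _ e2] assms(10) by blast
      ultimately have "x \<in> A ?k" unfolding A_def by blast
      then show ?thesis by blast
    qed
    then show ?thesis unfolding B_def by auto
  qed
  have lim: "(\<lambda>k. measure M (B k)) \<longlonglongrightarrow> 0"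
    using finite_Lim_measure_decseq[of B] Bmeas Bdec Ball by auto
  have smallB: "\<exists>k. measure M (B k) < e" if "e > 0" for e
  proof -
    have "eventually (\<lambda>k. measure M (B k) < e) sequentially"
      using order_tendstoD(2)[OF lim that] .
    then show ?thesis using eventually_sequentially by auto
  qed
  have ip: "ipow V (int n) = V ^^ n" for V :: "'a \<Rightarrow> 'a" and n unfolding ipow_def by simp
  have pk0: "p ^ k \<noteq> 0" "q ^ k \<noteq> 0" for k using assms(6,7) by auto
  have cop: "gcd (p ^ k) (q ^ k) = 1" "gcd (q ^ k) (p ^ k) = 1" for k
    using assms(8) by (simp_all add: coprime_commute)
  have key: "d_u M S ((T \<circ> U) ^^ n) \<le> measure M (B k)"
    if "\<And>x. x \<in> A k \<Longrightarrow> ((T \<circ> U) ^^ n) x = S x" for S n k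
  proof -
    have "{x \<in> space M. S x \<noteq> ((T \<circ> U) ^^ n) x} \<subseteq> B k" unfolding B_def using that by auto
    then show ?thesis unfolding d_u_def using finite_measure_mono Bmeas by blast
  qed
  have partT: "in_uniform_closure M (cyclic_gen (T \<circ> U)) T"
    unfolding in_uniform_closure_def cyclic_gen_def
  proof (intro allI impI)
    fix e :: real assume "e > 0"
    then obtain k where k: "measure M (B k) < e" using smallB by blast
    obtain a b where ab: "q ^ k * a = p ^ k * b + 1" using bezout_nat[OF pk0(2)[of k], of "p ^ k"] cop(2)[of k] by auto
    define n where "n = q ^ k * a"
    have "((T \<circ> U) ^^ n) x = T x" if "x \<in> A k" for x
    proof -
      have a1: "(T ^^ (p ^ k)) x = x" "(U ^^ (q ^ k)) x = x" using that unfolding A_def by auto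
      have "(U ^^ n) x = x" unfolding n_def using fix_iter[where f="U ^^ q ^ k" and x=x and n=a, OF a1(2)] by (simp add: funpow_mult)
      moreover have "(T ^^ n) x = T x" unfolding n_def ab
        using fix_iter[where f="T ^^ p ^ k" and x=x and n=b, OF a1(1)] by (simp add: funpow_mult mult.commute)
      ultimately show ?thesis using funpow_comp_comm[of T U n x] comm by simp
    qed
    then have "d_u M T ((T \<circ> U) ^^ n) \<le> measure M (B k)" by (rule key)
    then have "d_u M T ((T \<circ> U) ^^ n) < e" using k by linarith
    then show "\<exists>R\<in>range (ipow (T \<circ> U)). d_u M T R < e" using ip by (metis rangeI)
  qed
  have partU: "in_uniform_closure M (cyclic_gen (T \<circ> U)) U"
    unfolding in_uniform_closure_def cyclic_gen_def
  proof (intro allI impI)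
    fix e :: real assume "e > 0"
    then obtain k where k: "measure M (B k) < e" using smallB by blast
    obtain a b where ab: "p ^ k * a = q ^ k * b + 1" using bezout_nat[OF pk0(1)[of k], of "q ^ k"] cop(1)[of k] by auto
    define n where "n = p ^ k * a"
    have "((T \<circ> U) ^^ n) x = U x" if "x \<in> A k" for x
    proof -
      have a1: "(T ^^ (p ^ k)) x = x" "(U ^^ (q ^ k)) x = x" using that unfolding A_def by auto
      have "(T ^^ n) x = x" unfolding n_def using fix_iter[where f="T ^^ p ^ k" and x=x and n=a, OF a1(1)] by (simp add: funpow_mult)
      moreover have "(U ^^ n) x = U x" unfolding n_def ab
        using fix_iter[where f="U ^^ q ^ k" and x=x and n=b, OF a1(2)] by (simp add: funpow_mult mult.commute)
      moreover have "(T ^^ n) (U x) = U ((T ^^ n) x)" using funpow_comm[of T U] comm by metis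
      ultimately show ?thesis using funpow_comp_comm[of T U n x] comm by simp
    qed
    then have "d_u M U ((T \<circ> U) ^^ n) \<le> measure M (B k)" by (rule key)
    then have "d_u M U ((T \<circ> U) ^^ n) < e" using k by linarith
    then show "\<exists>R\<in>range (ipow (T \<circ> U)). d_u M U R < e" using ip by (metis rangeI)
  qed
  show ?thesis using partT partU by simp
qed

end
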